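(* Let $N, K \geq 2$ be integers, let $N_0>0$, $P>0$, $T>0$, fix $i\in\{1,\ldots,K\}$ and let $\mathbf{s}_k\in\mathbb{C}^N$ for $k\neq i$ be given. For $m=1,\ldots,N$ define $$\lambda^{(i)}_m = \sqrt{1+\tfrac12\cos(2\pi \tfrac mN)}\sum_{k=1,k\neq i}^K (\mathbf{s}_k^* Q_m \mathbf{s}_k),\qquad \hat\lambda^{(i)}_m = \sqrt{1+\tfrac12\cos(2\pi(\tfrac mN + \tfrac1{2N}))}\sum_{k=1,k\neq i}^K (\mathbf{s}_k^* \hat Q_m \mathbf{s}_k).$$ Let $\lambda^{(i)}_{\min}$ be the minimum eigenvalue of $\Sigma_i = \sum_{k\neq i}\sum_{m=1}^N[(\mathbf{s}_k^*Q_m\mathbf{s}_k)Q_m + (\mathbf{s}_k^*\hat Q_m\mathbf{s}_k)\hat Q_m]$, and let $$\operatorname{SINR}^\star_i = \max_{\mathbf{s}_i\in\mathbb{C}^N,\ \|\mathbf{s}_i\|^2=N} \left\{ \frac{1}{6N^2}\sum_{k=1, k\neq i}^K \sum_{m=1}^N S_m^{i,k} + \frac{N_0}{2PT}\right\}^{-1/2}.$$ Then $$\min_m \lambda^{(i)}_m + \min_m \hat\lambda^{(i)}_m \le \lambda^{(i)}_{\min} \le \gamma := \min\left\{\min_m \lambda^{(i)}_m + \max_m \hat\lambda^{(i)}_m,\ \max_m\lambda^{(i)}_m + \min_m\hat\lambda^{(i)}_m\right\},$$ and consequently $$\left\{\frac{\gamma}{6N} + \frac{N_0}{2PT}\right\}^{-1/2}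 \le \operatorname{SINR}^\star_i \le \left\{\frac{1}{6N}\left(\min_m \lambda^{(i)}_m + \min_m\hat\lambda^{(i)}_m\right) + \frac{N_0}{2PT}\right\}^{-1/2}.$$
   Context: Indices run over $1,\ldots,N$; $j$ is the imaginary unit and $\mathbf{z}^*$ denotes conjugate transpose. $V$ and $\hat V$ are the $N\times N$ unitary matrices with entries $V_{m,n} = \frac{1}{\sqrt N}\exp(-2\pi j \frac{mn}{N})$ and $\hat V_{m,n} = \frac{1}{\sqrt N}\exp\!\left(-2\pi j n(\frac{m}{N} + \frac{1}{2N})\right)$. For $m=1,\ldots,N$, $C_m$ (resp. $\hat C_m$) is the $N\times N$ diagonal matrix whose only nonzero entry is the $(m,m)$ entry, equal to $\sqrt{1+\frac12\cos(2\pi \frac mN)}$ (resp. $\sqrt{1+\frac12\cos(2\pi(\frac mN+\frac1{2N}))}$). Set $Q_m = V^* C_m V$ and $\hat Q_m = \hat V^* \hat C_m \hat V$. For $\mathbf{s}_i,\mathbf{s}_k\in\mathbb{C}^N$, $S_m^{i,k} = (\mathbf{s}_i^* Q_m \mathbf{s}_i)(\mathbf{s}_k^* Q_m \mathbf{s}_k) + (\mathbf{s}_i^* \hat Q_m \mathbf{s}_i)(\mathbf{s}_k^* \hat Q_m \mathbf{s}_k)$. *)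

theory Defs
  imports "Jordan_Normal_Form.Schur_Decomposition"
begin

text \<open>Matrices are N x N Jordan_Normal_Form matrices; the paper's 1-based index m (row)
  and n (column) correspond to the 0-based JNF indices m-1 and n-1.\<close>

definition Vmat :: "nat \<Rightarrow> complex mat" where
  "Vmat N = mat N N (\<lambda>(a, b). let m = real (a + 1); n = real (b + 1) in
      exp (- 2 * pi * \<i> * complex_of_real (m * n / real N)) / complex_of_real (sqrt (real N)))"

definition Vhat :: "nat \<Rightarrow> complex mat" where
  "Vhat N = mat N N (\<lambda>(a, b). let m = real (a + 1); n = real (b + 1) in
      exp (- 2 * pi * \<i> * complex_of_real (n * (m / real N + 1 / (2 * real N))))
        / complex_of_real (sqrt (real N)))"

definition cval :: "nat \<Rightarrow> nat \<Rightarrow> real" where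
  "cval N m = sqrt (1 + 1/2 * cos (2 * pi * (real m / real N)))"

definition chat :: "nat \<Rightarrow> nat \<Rightarrow> real" where
  "chat N m = sqrt (1 + 1/2 * cos (2 * pi * (real m / real N + 1 / (2 * real N))))"

definition Cmat :: "nat \<Rightarrow> nat \<Rightarrow> complex mat" where
  "Cmat N m = mat N N (\<lambda>(a, b). if a = b \<and> a + 1 = m then complex_of_real (cval N m) else 0)"

definition Chatmat :: "nat \<Rightarrow> nat \<Rightarrow> complex mat" where
  "Chatmat N m = mat N N (\<lambda>(a, b). if a = b \<and> a + 1 = m then complex_of_real (chat N m) else 0)"

definition Qmat :: "nat \<Rightarrow> nat \<Rightarrow> complex mat" where
  "Qmat N m = mat_adjoint (Vmat N) * Cmat N m * Vmat N"

definition Qhat :: "nat \<Rightarrow> nat \<Rightarrow> complex mat" where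
  "Qhat N m = mat_adjoint (Vhat N) * Chatmat N m * Vhat N"

definition qf :: "complex mat \<Rightarrow> complex vec \<Rightarrow> complex" where
  "qf A z = conjugate z \<bullet> (A *\<^sub>v z)"

text \<open>S_m^{i,k}.  Both factors are real (Q_m is Hermitian), so we take the real part.\<close>
definition Sm :: "nat \<Rightarrow> nat \<Rightarrow> complex vec \<Rightarrow> complex vec \<Rightarrow> real" where
  "Sm N m si sk = Re (qf (Qmat N m) si * qf (Qmat N m) sk + qf (Qhat N m) si * qf (Qhat N m) sk)"

definition lam :: "nat \<Rightarrow> nat \<Rightarrow> nat \<Rightarrow> (nat \<Rightarrow> complex vec) \<Rightarrow> nat \<Rightarrow> real" where
  "lam N K i s m = cval N m * (\<Sum>k\<in>{1..K} - {i}. Re (qf (Qmat N m) (s k)))"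

definition lamhat :: "nat \<Rightarrow> nat \<Rightarrow> nat \<Rightarrow> (nat \<Rightarrow> complex vec) \<Rightarrow> nat \<Rightarrow> real" where
  "lamhat N K i s m = chat N m * (\<Sum>k\<in>{1..K} - {i}. Re (qf (Qhat N m) (s k)))"

definition Sigma_i :: "nat \<Rightarrow> nat \<Rightarrow> nat \<Rightarrow> (nat \<Rightarrow> complex vec) \<Rightarrow> complex mat" where
  "Sigma_i N K i s = mat N N (\<lambda>(a, b). \<Sum>k\<in>{1..K} - {i}. \<Sum>m\<in>{1..N}.
      qf (Qmat N m) (s k) * Qmat N m $$ (a, b) + qf (Qhat N m) (s k) * Qhat N m $$ (a, b))"

text \<open>Minimum eigenvalue of a Hermitian matrix (its eigenvalues are real).\<close>
definition min_eig :: "complex mat \<Rightarrow> real" where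
  "min_eig A = Min {x :: real. eigenvalue A (complex_of_real x)}"

definition SINR_star :: "nat \<Rightarrow> nat \<Rightarrow> nat \<Rightarrow> (nat \<Rightarrow> complex vec) \<Rightarrow> real \<Rightarrow> real \<Rightarrow> real \<Rightarrow> real" where
  "SINR_star N K i s N0 P T =
     (SUP si \<in> {si \<in> carrier_vec N. (\<Sum>j<N. (cmod (si $ j))\<^sup>2) = real N}.
        (1 / (6 * real N ^ 2) * (\<Sum>k\<in>{1..K} - {i}. \<Sum>m\<in>{1..N}. Sm N m si (s k))
          + N0 / (2 * P * T)) powr (-1/2))"

end

theory Submission
  imports Defs "Jordan_Normal_Form.Spectral_Radius"
begin


definition herm :: "complex mat \<Rightarrow> nat \<Rightarrow> bool" where
  "herm A n \<longleftrightarrow> A \<in> carrier_mat n n \<and> (\<forall>a<n. \<forall>b<n. A $$ (a,b) = cnj (A $$ (b,a)))"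

definition nrm2 :: "nat \<Rightarrow> complex vec \<Rightarrow> real" where
  "nrm2 n x = (\<Sum>a<n. (cmod (x $ a))^2)"

lemma hermD: "herm A n \<Longrightarrow> a < n \<Longrightarrow> b < n \<Longrightarrow> A $$ (a,b) = cnj (A $$ (b,a))"
  unfolding herm_def by blast

lemma hermC: "herm A n \<Longrightarrow> A \<in> carrier_mat n n"
  unfolding herm_def by blast

lemma cnj_mult_self: "cnj z * z = complex_of_real ((cmod z)^2)"
  by (metis complex_norm_square mult.commute)

lemma sum_cnj_self: "(\<Sum>a<n. cnj (v a) * v a) = complex_of_real (\<Sum>a<n. (cmod (v a))^2)"
  by (simp only: cnj_mult_self of_real_sum)

lemma sum_delta_mult: assumes "a < (n::nat)"
  shows "(\<Sum>b<n. (if a = b then c else 0) * v b) = c * (v a :: complex)"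
proof -
  have "(\<Sum>b<n. (if a = b then c else 0) * v b) = (\<Sum>b<n. if a = b then c * v b else 0)"
    by (rule sum.cong) auto
  also have "\<dots> = c * v a" using assms by (subst sum.delta') auto
  finally show ?thesis .
qed

lemma mv_sum: assumes "A \<in> carrier_mat n n" "z \<in> carrier_vec n" "a < n"
  shows "(A *\<^sub>v z) $ a = (\<Sum>b<n. A$$(a,b) * z$b)"
  using assms by (auto intro!: sum.cong simp: mult_mat_vec_def scalar_prod_def atLeast0LessThan)

lemma row_sum: assumes "A \<in> carrier_mat n n" "z \<in> carrier_vec n" "a < n"
  shows "row A a \<bullet> z = (\<Sum>b<n. A$$(a,b) * z$b)"
  using assms by (auto intro!: sum.cong simp: scalar_prod_def atLeast0LessThan)

lemma qf_sum1: assumes "z \<in> carrier_vec n" "y \<in> carrier_vec n"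
  shows "conjugate z \<bullet> y = (\<Sum>a<n. cnj (z$a) * y $ a)"
  using assms by (auto intro!: sum.cong simp: scalar_prod_def atLeast0LessThan)

lemma qf_sum: assumes "A \<in> carrier_mat n n" "z \<in> carrier_vec n"
  shows "qf A z = (\<Sum>a<n. \<Sum>b<n. cnj (z$a) * A$$(a,b) * z$b)"
proof -
  have "qf A z = (\<Sum>a<n. cnj (z$a) * (A *\<^sub>v z) $ a)"
    using assms unfolding qf_def by (simp add: qf_sum1)
  also have "\<dots> = (\<Sum>a<n. cnj (z$a) * (\<Sum>b<n. A$$(a,b) * z$b))"
    using assms by (simp add: row_sum)
  also have "\<dots> = (\<Sum>a<n. \<Sum>b<n. cnj (z$a) * A$$(a,b) * z$b)"
    by (simp add: sum_distrib_left mult.assoc)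
  finally show ?thesis .
qed

lemma qf_real: assumes H: "herm A n" and z: "z \<in> carrier_vec n"
  shows "cnj (qf A z) = qf A z"
proof -
  have A: "A \<in> carrier_mat n n" using hermC[OF H] by simp
  have "cnj (qf A z) = (\<Sum>a<n. \<Sum>b<n. z$a * cnj (A$$(a,b)) * cnj (z$b))"
    by (simp add: qf_sum[OF A z])
  also have "\<dots> = (\<Sum>a<n. \<Sum>b<n. z$a * A$$(b,a) * cnj (z$b))"
  proof (intro sum.cong refl)
    fix a b assume "a \<in> {..<n}" "b \<in> {..<n}"
    hence "cnj (A$$(a,b)) = A$$(b,a)" using hermD[OF H, of b a] by simp
    thus "z$a * cnj (A$$(a,b)) * cnj (z$b) = z$a * A$$(b,a) * cnj (z$b)" by simp
  qed
  also have "\<dots> = (\<Sum>b<n. \<Sum>a<n. cnj (z$b) * A$$(b,a) * z$a)"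
    by (subst sum.swap) (simp add: mult.commute mult.left_commute)
  also have "\<dots> = qf A z" by (simp add: qf_sum[OF A z])
  finally show ?thesis .
qed

lemma qf_eig: assumes A: "A \<in> carrier_mat n n" and v: "v \<in> carrier_vec n"
  and e: "A *\<^sub>v v = e \<cdot>\<^sub>v v"
  shows "qf A v = e * of_real (nrm2 n v)"
proof -
  have "qf A v = e * (conjugate v \<bullet> v)"
    unfolding qf_def e using v by simp
  also have "\<dots> = e * (\<Sum>a<n. cnj (v$a) * v $ a)"
    using v by (simp add: qf_sum1)
  also have "\<dots> = e * (\<Sum>a<n. of_real ((cmod (v$a))^2))"
    by (simp only: sum_cnj_self of_real_sum)
  finally show ?thesis by (simp add: nrm2_def)
qed

lemma nrm2_pos: assumes v: "v \<in> carrier_vec n" "v \<noteq> 0\<^sub>v n" shows "nrm2 n v > 0"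
proof -
  obtain a where a: "a < n" "v $ a \<noteq> 0" using v by (metis eq_vecI carrier_vecD index_zero_vec)
  have "(cmod (v$a))^2 \<le> nrm2 n v" unfolding nrm2_def
    by (rule member_le_sum) (use a in auto)
  moreover have "(cmod (v$a))^2 > 0" using a by simp
  ultimately show ?thesis by linarith
qed

lemma nrm2_nonneg: "nrm2 n v \<ge> 0" unfolding nrm2_def by (simp add: sum_nonneg)

lemma eig_real: assumes H: "herm A n" and e: "eigenvalue A e"
  shows "e = of_real (Re e)"
proof -
  have A: "A \<in> carrier_mat n n" using hermC[OF H] by simp
  obtain v where v: "v \<in> carrier_vec n" "v \<noteq> 0\<^sub>v n" "A *\<^sub>v v = e \<cdot>\<^sub>v v"
    using e A unfolding eigenvalue_def eigenvector_def by auto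
  have q: "qf A v = e * of_real (nrm2 n v)" by (rule qf_eig[OF A v(1) v(3)])
  have "cnj e * of_real (nrm2 n v) = e * of_real (nrm2 n v)"
    using qf_real[OF H v(1)] q by simp
  hence "cnj e = e" using nrm2_pos[OF v(1,2)] by simp
  thus ?thesis by (metis Reals_cnj_iff complex_is_Real_iff of_real_Re)
qed

lemma fin_eig: fixes A :: "complex mat" assumes A: "A \<in> carrier_mat n n"
  shows "finite {x::real. eigenvalue A (of_real x)}"
proof -
  have "{x::real. eigenvalue A (of_real x)} = of_real -` spectrum A"
    unfolding spectrum_def by auto
  moreover have "finite (of_real -` spectrum A :: real set)"
    by (rule finite_vimageI) (use card_finite_spectrum(1)[OF A] in \<open>auto intro: injI\<close>)
  ultimately show ?thesis by simp
qed

lemma real_cs: fixes p q :: "nat \<Rightarrow> real"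
  shows "(\<Sum>a<n. p a * q a)^2 \<le> (\<Sum>a<n. (p a)^2) * (\<Sum>a<n. (q a)^2)"
proof (cases "(\<Sum>a<n. (q a)^2) = 0")
  case True
  hence "\<forall>a<n. q a = 0" by (simp add: sum_nonneg_eq_0_iff)
  thus ?thesis by (simp add: sum_nonneg)
next
  case False
  define Q where "Q = (\<Sum>a<n. (q a)^2)"
  have Q: "Q > 0" using False Q_def by (simp add: sum_nonneg order_le_neq_trans)
  define r where "r = (\<Sum>a<n. p a * q a) / Q"
  have "0 \<le> (\<Sum>a<n. (p a - r * q a)^2)" by (simp add: sum_nonneg)
  also have "\<dots> = (\<Sum>a<n. (p a)^2) - 2 * r * (\<Sum>a<n. p a * q a) + r^2 * Q"
    by (simp add: power2_diff sum.distrib sum_subtractf sum_distrib_left Q_def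
        algebra_simps power_mult_distrib)
  also have "\<dots> = (\<Sum>a<n. (p a)^2) - (\<Sum>a<n. p a * q a)^2 / Q"
    using Q by (simp add: r_def power2_eq_square field_simps)
  finally show ?thesis using Q by (simp add: Q_def[symmetric] field_simps)
qed

lemma cplx_cs: fixes x y :: "nat \<Rightarrow> complex"
  shows "(Re (\<Sum>a<n. cnj (x a) * y a))^2 \<le> (\<Sum>a<n. (cmod (x a))^2) * (\<Sum>a<n. (cmod (y a))^2)"
proof -
  have "\<bar>Re (\<Sum>a<n. cnj (x a) * y a)\<bar> \<le> cmod (\<Sum>a<n. cnj (x a) * y a)" by (rule abs_Re_le_cmod)
  also have "\<dots> \<le> (\<Sum>a<n. cmod (x a) * cmod (y a))"
    by (rule order_trans[OF norm_sum]) (simp add: norm_mult)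
  finally have "(Re (\<Sum>a<n. cnj (x a) * y a))^2 \<le> (\<Sum>a<n. cmod (x a) * cmod (y a))^2"
    by (metis abs_ge_zero power2_abs power_mono)
  also have "\<dots> \<le> (\<Sum>a<n. (cmod (x a))^2) * (\<Sum>a<n. (cmod (y a))^2)" by (rule real_cs)
  finally show ?thesis .
qed

lemma qf_sq: assumes H: "herm M n" and x: "x \<in> carrier_vec n"
  shows "(Re (qf M x))^2 \<le> nrm2 n x * Re (qf (M * M) x)"
proof -
  have M: "M \<in> carrier_mat n n" using hermC[OF H] by simp
  define y where "y = M *\<^sub>v x"
  have y: "y \<in> carrier_vec n" using M x y_def by simp
  have 1: "qf M x = (\<Sum>a<n. cnj (x$a) * y$a)" unfolding qf_def y_def[symmetric]
    using x y by (simp add: qf_sum1)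
  have "qf (M * M) x = conjugate x \<bullet> (M *\<^sub>v y)" unfolding qf_def y_def
    using assoc_mult_mat_vec[OF M M x] by simp
  also have "\<dots> = (\<Sum>a<n. cnj (x$a) * (\<Sum>k<n. M$$(a,k) * y$k))"
    using x y M by (simp add: qf_sum1 row_sum)
  also have "\<dots> = (\<Sum>a<n. \<Sum>k<n. cnj (x$a) * M$$(a,k) * y$k)"
    by (simp add: sum_distrib_left mult.assoc)
  also have "\<dots> = (\<Sum>k<n. \<Sum>a<n. cnj (x$a) * M$$(a,k) * y$k)"
    by (rule sum.swap)
  also have "\<dots> = (\<Sum>k<n. \<Sum>a<n. cnj (M$$(k,a) * x$a) * y$k)"
  proof (rule sum.cong[OF refl], rule sum.cong[OF refl])
    fix k a assume "k \<in> {..<n}" "a \<in> {..<n}"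
    hence "M$$(a,k) = cnj (M$$(k,a))" using hermD[OF H, of a k] by auto
    thus "cnj (x$a) * M$$(a,k) * y$k = cnj (M$$(k,a) * x$a) * y$k" by (simp add: ac_simps)
  qed
  also have "\<dots> = (\<Sum>k<n. cnj (\<Sum>a<n. M$$(k,a) * x$a) * y$k)"
    by (simp only: sum_distrib_right cnj_sum)
  also have "\<dots> = (\<Sum>k<n. cnj (y$k) * y$k)"
    using M x by (simp add: y_def row_sum)
  also have "\<dots> = of_real (\<Sum>k<n. (cmod (y$k))^2)"
    by (rule sum_cnj_self)
  finally have 2: "Re (qf (M * M) x) = (\<Sum>k<n. (cmod (y$k))^2)" by simp
  show ?thesis unfolding 1 2 nrm2_def by (rule cplx_cs)
qed


lemma pow_mat_add: assumes A: "A \<in> carrier_mat n n"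
  shows "A ^\<^sub>m (a + b) = A ^\<^sub>m a * A ^\<^sub>m b"
proof (induction b)
  case 0 then show ?case using A by simp
next
  case (Suc b)
  have "A ^\<^sub>m (a + Suc b) = (A ^\<^sub>m a * A ^\<^sub>m b) * A" using Suc by simp
  also have "\<dots> = A ^\<^sub>m a * (A ^\<^sub>m b * A)"
    by (rule assoc_mult_mat[of _ n n _ n _ n]) (use A in auto)
  finally show ?case by simp
qed

lemma herm_mult_self: assumes H: "herm M n" shows "herm (M * M) n"
proof -
  have M: "M \<in> carrier_mat n n" using hermC[OF H] by simp
  have MM: "(M * M) $$ (a, b) = cnj ((M * M) $$ (b, a))" if ab: "a < n" "b < n" for a b
  proof -
    have "(M * M) $$ (a, b) = (\<Sum>k<n. M $$ (a,k) * M $$ (k,b))"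
      using M ab by (simp add: row_sum col_def)
    also have "\<dots> = (\<Sum>k<n. cnj (M $$ (b,k) * M $$ (k,a)))"
    proof (rule sum.cong[OF refl])
      fix k assume "k \<in> {..<n}"
      hence "M$$(a,k) = cnj (M$$(k,a))" "M$$(k,b) = cnj (M$$(b,k))" using hermD[OF H, of a k] hermD[OF H, of k b] ab by auto
      thus "M $$ (a,k) * M $$ (k,b) = cnj (M $$ (b,k) * M $$ (k,a))" by simp
    qed
    also have "\<dots> = cnj ((M * M) $$ (b, a))"
      using M ab by (simp add: row_sum col_def cnj_sum)
    finally show ?thesis .
  qed
  have "M * M \<in> carrier_mat n n" using M by simp
  thus ?thesis unfolding herm_def using MM by blast
qed

lemma herm_pow2: assumes H: "herm G n" shows "herm (G ^\<^sub>m (2^k)) n"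
proof (induction k)
  case 0
  have G: "G \<in> carrier_mat n n" using hermC[OF H] by simp
  thus ?case using H by simp
next
  case (Suc k)
  have G: "G \<in> carrier_mat n n" using hermC[OF H] by simp
  have "G ^\<^sub>m (2^Suc k) = G ^\<^sub>m (2^k) * G ^\<^sub>m (2^k)"
    using pow_mat_add[OF G, of "2^k" "2^k"] by (simp add: mult_2)
  thus ?case using herm_mult_self[OF Suc] by simp
qed

lemma qf_bound: assumes M: "M \<in> carrier_mat n n" and x: "x \<in> carrier_vec n"
  and C: "norm_bound M C"
  shows "cmod (qf M x) \<le> C * (\<Sum>a<n. cmod (x$a))^2"
proof -
  have "cmod (qf M x) \<le> (\<Sum>a<n. cmod (\<Sum>b<n. cnj (x$a) * M$$(a,b) * x$b))"
    unfolding qf_sum[OF M x] by (rule norm_sum)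
  also have "\<dots> \<le> (\<Sum>a<n. \<Sum>b<n. cmod (cnj (x$a) * M$$(a,b) * x$b))"
    by (intro sum_mono norm_sum)
  also have "\<dots> \<le> (\<Sum>a<n. \<Sum>b<n. C * (cmod (x$a) * cmod (x$b)))"
  proof (intro sum_mono)
    fix a b assume "a \<in> {..<n}" "b \<in> {..<n}"
    hence "cmod (M$$(a,b)) \<le> C" using C M unfolding norm_bound_def by auto
    hence "cmod (x$a) * cmod (M$$(a,b)) * cmod (x$b) \<le> cmod (x$a) * C * cmod (x$b)"
      by (intro mult_right_mono mult_left_mono) auto
    thus "cmod (cnj (x$a) * M$$(a,b) * x$b) \<le> C * (cmod (x$a) * cmod (x$b))"
      by (simp add: norm_mult ac_simps)
  qed
  also have "\<dots> = C * (\<Sum>a<n. \<Sum>b<n. cmod (x$a) * cmod (x$b))"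
    by (simp add: sum_distrib_left)
  also have "\<dots> = C * (\<Sum>a<n. cmod (x$a))^2"
    by (simp add: power2_eq_square sum_product)
  finally show ?thesis .
qed


lemma rayleigh_eig:
  assumes H: "herm A n" and n: "n > 0" and x: "x \<in> carrier_vec n" and s: "nrm2 n x > 0"
  shows "\<exists>\<mu>. eigenvalue A (of_real \<mu>) \<and> \<mu> * nrm2 n x \<le> Re (qf A x)"
proof (rule ccontr)
  assume neg: "\<not> ?thesis"
  have A: "A \<in> carrier_mat n n" using hermC[OF H] by simp
  define E where "E = {x::real. eigenvalue A (of_real x)}"
  have finE: "finite E" using fin_eig[OF A] E_def by simp
  obtain e where e: "eigenvalue A e" using spectrum_non_empty[OF A n] unfolding spectrum_def by auto
  have "Re e \<in> E" using eig_real[OF H e] e E_def by simp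
  hence neE: "E \<noteq> {}" by auto
  define s where "s = nrm2 n x"
  define \<rho> where "\<rho> = Re (qf A x)"
  define r where "r = \<rho> / s"
  define mmin where "mmin = Min E"
  define mmax where "mmax = Max E"
  have mm: "\<And>\<mu>. \<mu> \<in> E \<Longrightarrow> mmin \<le> \<mu> \<and> \<mu> \<le> mmax" using finE by (auto simp: mmin_def mmax_def)
  have mminE: "mmin \<in> E" using finE neE mmin_def by simp
  hence "mmin * s > \<rho>" using neg E_def s_def \<rho>_def by auto
  hence rlt: "r < mmin" using s by (simp add: r_def s_def pos_divide_less_eq)
  define c where "c = mmax + 1"
  define t where "t = c - (mmin + r) / 2"
  have "mmin \<le> mmax" using mm mminE by auto
  hence tpos: "t > c - mmin" "c - mmin \<ge> 1" "t > 0" using rlt by (auto simp: t_def c_def)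
  define G where "G = mat n n (\<lambda>(a,b). ((if a = b then of_real c else 0) - A $$ (a,b)) / of_real t)"
  have G: "G \<in> carrier_mat n n" by (simp add: G_def)
  have HG: "herm G n" unfolding herm_def
  proof (intro conjI allI impI G)
    fix a b assume ab: "a < n" "b < n"
    show "G $$ (a, b) = cnj (G $$ (b, a))" using ab hermD[OF H ab] by (simp add: G_def)
  qed
  have Gv: "(G *\<^sub>v v) $ a = (of_real c * v $ a - (A *\<^sub>v v) $ a) / of_real t"
    if v: "v \<in> carrier_vec n" and a: "a < n" for v a
  proof -
    have "(G *\<^sub>v v) $ a = (\<Sum>b<n. ((if a = b then of_real c else 0) - A $$ (a,b)) / of_real t * v $ b)"
      using mv_sum[OF G v a] a by (simp add: G_def)
    also have "\<dots> = ((\<Sum>b<n. (if a = b then of_real c else 0) * v $ b) - (\<Sum>b<n. A $$ (a,b) * v $ b)) / of_real t"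
      by (simp add: sum_divide_distrib[symmetric] sum_subtractf[symmetric] algebra_simps)
    also have "\<dots> = (of_real c * v $ a - (A *\<^sub>v v) $ a) / of_real t"
      using a mv_sum[OF A v a] sum_delta_mult[OF a, of "of_real c" "\<lambda>b. v $ b"] by simp
    finally show ?thesis .
  qed
  have spec: "cmod e < 1" if ev: "eigenvalue G e" for e
  proof -
    obtain v where v: "v \<in> carrier_vec n" "v \<noteq> 0\<^sub>v n" "G *\<^sub>v v = e \<cdot>\<^sub>v v"
      using ev G unfolding eigenvalue_def eigenvector_def by auto
    have "A *\<^sub>v v = (of_real c - of_real t * e) \<cdot>\<^sub>v v"
    proof (rule eq_vecI)
      fix a assume "a < dim_vec ((of_real c - of_real t * e) \<cdot>\<^sub>v v)"
      hence a: "a < n" using v by simp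
      have "(G *\<^sub>v v) $ a = e * v $ a" using v a by simp
      with Gv[OF v(1) a] have "(of_real c * v $ a - (A *\<^sub>v v) $ a) / of_real t = e * v $ a" by simp
      hence "(A *\<^sub>v v) $ a = of_real c * v $ a - of_real t * e * v $ a" using tpos(3)
        by (simp add: field_simps)
      then show "(A *\<^sub>v v) $ a = ((of_real c - of_real t * e) \<cdot>\<^sub>v v) $ a" using v a
        by (simp add: algebra_simps)
    qed (use v A in auto)
    hence ev: "eigenvalue A (of_real c - of_real t * e)"
      using v A unfolding eigenvalue_def eigenvector_def by auto
    define \<mu> where "\<mu> = Re (of_real c - of_real t * e)"
    have eq: "of_real c - of_real t * e = of_real \<mu>" using eig_real[OF H ev] \<mu>_def by simp
    hence "\<mu> \<in> E" using ev E_def by simp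
    hence "mmin \<le> \<mu>" "\<mu> \<le> mmax" using mm by auto
    have e_eq: "e = of_real ((c - \<mu>) / t)" using eq tpos(3) by (simp add: field_simps)
    have "(c - \<mu>) / t < 1" "(c - \<mu>) / t > 0" 
      using \<open>mmin \<le> \<mu>\<close> \<open>\<mu> \<le> mmax\<close> tpos by (auto simp: c_def)
    moreover have "cmod e = \<bar>(c - \<mu>) / t\<bar>" unfolding e_eq norm_of_real ..
    ultimately show ?thesis by simp
  qed
  have sr: "spectral_radius G < 1"
  proof -
    obtain e where "e \<in> spectrum G" "spectral_radius G = cmod e"
      using spectral_radius_mem_max(1)[OF G n] by auto
    thus ?thesis using spec unfolding spectrum_def by auto
  qed
  obtain C where C: "\<And>k. norm_bound (G ^\<^sub>m k) C"
    using spectral_radius_jnf_norm_bound_less_1_upper_triangular[OF G sr] by auto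
  define q where "q = (c - r) / t"
  have q1: "q > 1" using tpos rlt by (simp add: q_def t_def)
  have qG: "Re (qf G x) = q * s"
  proof -
    have "qf G x = (\<Sum>a<n. cnj (x$a) * ((of_real c * x $ a - (A *\<^sub>v x) $ a) / of_real t))"
      unfolding qf_def
    proof (subst qf_sum1[of x n "G *\<^sub>v x"])
      show "(\<Sum>a<n. cnj (x $ a) * (G *\<^sub>v x) $ a) =
        (\<Sum>a<n. cnj (x$a) * ((of_real c * x $ a - (A *\<^sub>v x) $ a) / of_real t))"
        by (rule sum.cong[OF refl]) (subst Gv[OF x], auto)
    qed (use x G in auto)
    also have "\<dots> = (of_real c * (\<Sum>a<n. cnj (x$a) * x $ a) - (\<Sum>a<n. cnj (x$a) * (A *\<^sub>v x) $ a)) / of_real t"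
      by (simp add: sum_divide_distrib[symmetric] sum_subtractf[symmetric] sum_distrib_left algebra_simps)
    also have "(\<Sum>a<n. cnj (x$a) * (A *\<^sub>v x) $ a) = qf A x"
      unfolding qf_def using x A by (simp add: qf_sum1)
    also have "(\<Sum>a<n. cnj (x$a) * x $ a) = of_real s"
      unfolding s_def nrm2_def by (rule sum_cnj_self)
    finally have "Re (qf G x) = (c * s - \<rho>) / t" by (simp add: \<rho>_def Re_divide_of_real)
    also have "\<dots> = q * s" using s tpos(3) by (simp add: q_def r_def s_def field_simps)
    finally show ?thesis .
  qed
  have grow: "Re (qf (G ^\<^sub>m (2^k)) x) \<ge> q ^ (2^k) * s" for k
  proof (induction k)
    case 0 then show ?case using qG G by simp
  next
    case (Suc k)
    define M where "M = G ^\<^sub>m (2^k)"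
    have HM: "herm M n" unfolding M_def by (rule herm_pow2[OF HG])
    have eqM: "G ^\<^sub>m (2^Suc k) = M * M"
      using pow_mat_add[OF G, of "2^k" "2^k"] by (simp add: mult_2 M_def)
    have s0: "s > 0" using s s_def by simp
    have "0 \<le> q ^ (2^k) * s" using q1 s0 by simp
    hence "(q ^ (2^k) * s)^2 \<le> (Re (qf M x))^2" using Suc M_def by (intro power_mono) auto
    also have "\<dots> \<le> s * Re (qf (M * M) x)" using qf_sq[OF HM x] s_def by simp
    finally have "s * (q ^ (2^Suc k) * s) \<le> s * Re (qf (M * M) x)"
      by (simp add: power2_eq_square power_mult power_add mult_2 algebra_simps)
    hence "q ^ (2^Suc k) * s \<le> Re (qf (M * M) x)" using s0 by simp
    thus ?case using eqM by simp
  qed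
  define X where "X = (\<Sum>a<n. cmod (x$a))^2"
  have bnd: "q ^ (2^k) * s \<le> C * X" for k
  proof -
    have "q ^ (2^k) * s \<le> Re (qf (G ^\<^sub>m (2^k)) x)" by (rule grow)
    also have "\<dots> \<le> cmod (qf (G ^\<^sub>m (2^k)) x)" by (rule complex_Re_le_cmod)
    also have "\<dots> \<le> C * X" unfolding X_def by (rule qf_bound[OF _ x C]) (use G in simp)
    finally show ?thesis .
  qed
  obtain k where k: "C * X / s < q ^ k" using real_arch_pow[OF q1] by auto
  have "q ^ k \<le> q ^ (2^k)" using q1 by (intro power_increasing) (auto intro: less_imp_le less_exp)
  hence "C * X / s < q ^ (2^k)" using k by linarith
  hence "C * X < q ^ (2^k) * s" using s s_def by (simp add: pos_divide_less_eq)
  thus False using bnd[of k] by linarith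
qed

definition vv :: "nat \<Rightarrow> nat \<Rightarrow> nat \<Rightarrow> complex" where
  "vv N a b = cis (- 2 * pi * (real (a+1) * real (b+1) / real N)) / of_real (sqrt (real N))"

definition vh :: "nat \<Rightarrow> nat \<Rightarrow> nat \<Rightarrow> complex" where
  "vh N a b = vv N a b * cis (- pi * real (b+1) / real N)"

lemma Vmat_idx: assumes "a < N" "b < N" shows "Vmat N $$ (a,b) = vv N a b"
proof -
  have "exp (- 2 * pi * \<i> * complex_of_real (real (a+1) * real (b+1) / real N))
      = cis (- 2 * pi * (real (a+1) * real (b+1) / real N))"
    unfolding cis_conv_exp by (simp add: algebra_simps)
  thus ?thesis using assms by (simp add: Vmat_def vv_def Let_def)
qed

lemma Vhat_idx: assumes "a < N" "b < N" shows "Vhat N $$ (a,b) = vh N a b"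
proof -
  have "exp (- 2 * pi * \<i> * complex_of_real (real (b+1) * (real (a+1) / real N + 1 / (2 * real N))))
      = cis (- 2 * pi * (real (b+1) * (real (a+1) / real N + 1 / (2 * real N))))"
    unfolding cis_conv_exp by (simp add: algebra_simps)
  also have "\<dots> = cis (- 2 * pi * (real (a+1) * real (b+1) / real N)) * cis (- pi * real (b+1) / real N)"
    unfolding cis_mult using assms by (intro arg_cong[where f=cis]) (simp add: field_simps)
  finally show ?thesis using assms by (simp add: Vhat_def vh_def vv_def Let_def)
qed

lemma cis_sum0: fixes N :: nat and d :: int
  assumes N: "N > 0" and d: "d \<noteq> 0" "\<bar>d\<bar> < int N"
  shows "(\<Sum>j<N. cis (2 * pi * real (j+1) * of_int d / real N)) = 0"
proof -
  define z where "z = cis (2 * pi * of_int d / real N)"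
  have zj: "cis (2 * pi * real (j+1) * of_int d / real N) = z ^ (j+1)" for j
    unfolding z_def DeMoivre by (rule arg_cong[where f=cis]) (simp add: field_simps)
  have zN: "z ^ N = 1"
  proof -
    have "z ^ N = cis (2 * pi * of_int d)"
      unfolding z_def DeMoivre using N by (intro arg_cong[where f=cis]) (simp add: field_simps)
    also have "\<dots> = 1" by (simp add: complex_eq_iff cos_int_2pin sin_int_2pin)
    finally show ?thesis .
  qed
  have z1: "z \<noteq> 1"
  proof
    assume "z = 1"
    hence "cos (2 * pi * of_int d / real N) = 1" unfolding z_def by (metis cis.sel(1) one_complex.sel(1))
    then obtain k :: int where k: "2 * pi * of_int d / real N = of_int k * 2 * pi"
      unfolding cos_one_2pi_int by auto
    hence "real_of_int d = of_int k * real N" using N by (simp add: field_simps)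
    hence "d = k * int N" by (metis of_int_eq_iff of_int_mult of_int_of_nat_eq)
    thus False using d by (cases "k = 0") (auto simp: abs_mult)
  qed
  have "(\<Sum>j<N. cis (2 * pi * real (j+1) * of_int d / real N)) = (\<Sum>j<N. z * z ^ j)"
    unfolding zj by simp
  also have "\<dots> = z * (\<Sum>j<N. z ^ j)" by (simp add: sum_distrib_left)
  also have "\<dots> = 0" using z1 zN by (simp add: sum_gp_strict)
  finally show ?thesis .
qed

lemma cis_sum: fixes N :: nat and d :: int
  assumes N: "N > 0" and d: "\<bar>d\<bar> < int N"
  shows "(\<Sum>j<N. cis (2 * pi * real (j+1) * of_int d / real N)) = (if d = 0 then of_nat N else 0)"
  using cis_sum0[OF N _ d] by auto

lemma vv_cols: assumes N: "N > 0" and ab: "a < N" "b < N"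
  shows "(\<Sum>m<N. cnj (vv N m a) * vv N m b) = (if a = b then 1 else 0)"
proof -
  have "cnj (vv N m a) * vv N m b = cis (2 * pi * real (m+1) * of_int (int a - int b) / real N) / of_real (real N)" for m
  proof -
    have "cnj (vv N m a) * vv N m b = cis (2 * pi * (real (m+1) * real (a+1) / real N)) * cis (- 2 * pi * (real (m+1) * real (b+1) / real N)) / (of_real (sqrt (real N)) * of_real (sqrt (real N)))"
      by (simp add: vv_def cis_cnj)
    also have "\<dots> = cis (2 * pi * real (m+1) * of_int (int a - int b) / real N) / of_real (real N)"
      unfolding cis_mult of_real_mult[symmetric] using N
      by (intro arg_cong2[where f="(/)"] arg_cong[where f=cis] arg_cong[where f=of_real]) (auto simp: field_simps)
    finally show ?thesis .
  qed
  hence "(\<Sum>m<N. cnj (vv N m a) * vv N m b) = (\<Sum>m<N. cis (2 * pi * real (m+1) * of_int (int a - int b) / real N)) / of_real (real N)"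
    by (simp add: sum_divide_distrib)
  also have "\<dots> = (if a = b then 1 else 0)"
    using cis_sum[OF N, of "int a - int b"] ab N by auto
  finally show ?thesis .
qed

lemma vv_rows: assumes N: "N > 0" and ab: "m < N" "m' < N"
  shows "(\<Sum>b<N. vv N m b * cnj (vv N m' b)) = (if m = m' then 1 else 0)"
proof -
  have "vv N m b * cnj (vv N m' b) = cis (2 * pi * real (b+1) * of_int (int m' - int m) / real N) / of_real (real N)" for b
  proof -
    have "vv N m b * cnj (vv N m' b) = cis (- 2 * pi * (real (m+1) * real (b+1) / real N)) * cis (2 * pi * (real (m'+1) * real (b+1) / real N)) / (of_real (sqrt (real N)) * of_real (sqrt (real N)))"
      by (simp add: vv_def cis_cnj)
    also have "\<dots> = cis (2 * pi * real (b+1) * of_int (int m' - int m) / real N) / of_real (real N)"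
      unfolding cis_mult of_real_mult[symmetric] using N
      by (intro arg_cong2[where f="(/)"] arg_cong[where f=cis] arg_cong[where f=of_real]) (auto simp: field_simps)
    finally show ?thesis .
  qed
  hence "(\<Sum>b<N. vv N m b * cnj (vv N m' b)) = (\<Sum>b<N. cis (2 * pi * real (b+1) * of_int (int m' - int m) / real N)) / of_real (real N)"
    by (simp add: sum_divide_distrib)
  also have "\<dots> = (if m = m' then 1 else 0)"
    using cis_sum[OF N, of "int m' - int m"] ab N by auto
  finally show ?thesis .
qed

lemma vh_cols: assumes N: "N > 0" and ab: "a < N" "b < N"
  shows "(\<Sum>m<N. cnj (vh N m a) * vh N m b) = (if a = b then 1 else 0)"
proof -
  have "cnj (vh N m a) * vh N m b = (cnj (vv N m a) * vv N m b) *
      (cis (pi * real (a+1) / real N) * cis (- pi * real (b+1) / real N))" for m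
    by (simp add: vh_def cis_cnj ac_simps)
  hence "(\<Sum>m<N. cnj (vh N m a) * vh N m b) = (\<Sum>m<N. cnj (vv N m a) * vv N m b) *
      (cis (pi * real (a+1) / real N) * cis (- pi * real (b+1) / real N))"
    by (simp add: sum_distrib_right)
  also have "\<dots> = (if a = b then 1 else 0)"
    unfolding vv_cols[OF assms] by (simp add: cis_mult)
  finally show ?thesis .
qed

lemma vh_rows: assumes N: "N > 0" and ab: "m < N" "m' < N"
  shows "(\<Sum>b<N. vh N m b * cnj (vh N m' b)) = (if m = m' then 1 else 0)"
proof -
  have "vh N m b * cnj (vh N m' b) = vv N m b * cnj (vv N m' b)" for b
  proof -
    have "vh N m b * cnj (vh N m' b) = vv N m b * cnj (vv N m' b) * (cis (- pi * real (b+1) / real N) * cis (pi * real (b+1) / real N))"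
      by (simp add: vh_def cis_cnj ac_simps)
    thus ?thesis by (simp add: cis_mult)
  qed
  thus ?thesis using vv_rows[OF assms] by simp
qed


lemma mm_sum: assumes "A \<in> carrier_mat n n" "B \<in> carrier_mat n n" "i < n" "j < n"
  shows "(A * B) $$ (i,j) = (\<Sum>k<n. A $$ (i,k) * B $$ (k,j))"
  using assms by (auto simp: scalar_prod_def atLeast0LessThan intro!: sum.cong)

lemma adj_idx: assumes "A \<in> carrier_mat n n" "i < n" "j < n"
  shows "mat_adjoint A $$ (i,j) = cnj (A $$ (j,i))"
  using assms by (simp add: mat_adjoint_def mat_of_rows_index)

lemma adj_carrier: "A \<in> carrier_mat n n \<Longrightarrow> mat_adjoint A \<in> carrier_mat n n"
  unfolding mat_adjoint_def using mat_of_rows_carrier(1)[of n "map conjugate (cols A)"] by simp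

lemma QW_idx: assumes W: "W \<in> carrier_mat N N" and m: "1 \<le> m" "m \<le> N" and ab: "a < N" "b < N"
  shows "(mat_adjoint W * mat N N (\<lambda>(a, b). if a = b \<and> a + 1 = m then complex_of_real cv else 0) * W) $$ (a,b)
     = of_real cv * cnj (W $$ (m-1,a)) * W $$ (m-1,b)"
proof -
  define D where "D = mat N N (\<lambda>(a, b). if a = b \<and> a + 1 = m then complex_of_real cv else 0)"
  have D: "D \<in> carrier_mat N N" by (simp add: D_def)
  have AW: "mat_adjoint W \<in> carrier_mat N N" using adj_carrier[OF W] .
  have m1: "m - 1 < N" using m by simp
  have 1: "(mat_adjoint W * D) $$ (a,l) = (if l = m - 1 then cnj (W $$ (m-1,a)) * of_real cv else 0)"
    if l: "l < N" for l
  proof -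
    have "(mat_adjoint W * D) $$ (a,l) = (\<Sum>k<N. cnj (W $$ (k,a)) * D $$ (k,l))"
      unfolding mm_sum[OF AW D ab(1) l] by (intro sum.cong refl) (simp add: adj_idx[OF W] ab)
    also have "\<dots> = (\<Sum>k<N. if k = l then (if l = m - 1 then cnj (W $$ (l,a)) * of_real cv else 0) else 0)"
      using l m by (intro sum.cong refl) (auto simp: D_def)
    also have "\<dots> = (if l = m - 1 then cnj (W $$ (m-1,a)) * of_real cv else 0)"
      using l by (simp add: sum.delta)
    finally show ?thesis .
  qed
  have "(mat_adjoint W * D * W) $$ (a,b) = (\<Sum>l<N. (mat_adjoint W * D) $$ (a,l) * W $$ (l,b))"
    by (rule mm_sum[of _ N]) (use AW D W ab in auto)
  also have "\<dots> = (\<Sum>l<N. if l = m - 1 then cnj (W $$ (m-1,a)) * of_real cv * W $$ (l,b) else 0)"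
    using 1 by (intro sum.cong refl) auto
  also have "\<dots> = of_real cv * cnj (W $$ (m-1,a)) * W $$ (m-1,b)"
    using m1 by (simp add: sum.delta)
  finally show ?thesis unfolding D_def .
qed

lemma Vmat_carrier: "Vmat N \<in> carrier_mat N N" by (simp add: Vmat_def)
lemma Vhat_carrier: "Vhat N \<in> carrier_mat N N" by (simp add: Vhat_def)

lemma Q_idx: assumes m: "1 \<le> m" "m \<le> N" and ab: "a < N" "b < N"
  shows "Qmat N m $$ (a,b) = of_real (cval N m) * cnj (vv N (m-1) a) * vv N (m-1) b"
proof -
  have m1: "m - 1 < N" using m by simp
  have "Qmat N m = mat_adjoint (Vmat N) * mat N N (\<lambda>(a, b). if a = b \<and> a + 1 = m then complex_of_real (cval N m) else 0) * Vmat N"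
    unfolding Qmat_def Cmat_def ..
  hence "Qmat N m $$ (a,b) = of_real (cval N m) * cnj (Vmat N $$ (m-1,a)) * Vmat N $$ (m-1,b)"
    using QW_idx[OF Vmat_carrier m ab, of "cval N m"] by simp
  thus ?thesis using Vmat_idx[OF m1 ab(1)] Vmat_idx[OF m1 ab(2)] by simp
qed

lemma Qh_idx: assumes m: "1 \<le> m" "m \<le> N" and ab: "a < N" "b < N"
  shows "Qhat N m $$ (a,b) = of_real (chat N m) * cnj (vh N (m-1) a) * vh N (m-1) b"
proof -
  have m1: "m - 1 < N" using m by simp
  have "Qhat N m = mat_adjoint (Vhat N) * mat N N (\<lambda>(a, b). if a = b \<and> a + 1 = m then complex_of_real (chat N m) else 0) * Vhat N"
    unfolding Qhat_def Chatmat_def ..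
  hence "Qhat N m $$ (a,b) = of_real (chat N m) * cnj (Vhat N $$ (m-1,a)) * Vhat N $$ (m-1,b)"
    using QW_idx[OF Vhat_carrier m ab, of "chat N m"] by simp
  thus ?thesis using Vhat_idx[OF m1 ab(1)] Vhat_idx[OF m1 ab(2)] by simp
qed

lemma Q_carrier: "Qmat N m \<in> carrier_mat N N"
proof -
  have "mat_adjoint (Vmat N) \<in> carrier_mat N N" by (rule adj_carrier[OF Vmat_carrier])
  moreover have "Cmat N m \<in> carrier_mat N N" by (simp add: Cmat_def)
  ultimately show ?thesis unfolding Qmat_def using Vmat_carrier by (metis mult_carrier_mat)
qed
lemma Qh_carrier: "Qhat N m \<in> carrier_mat N N"
proof -
  have "mat_adjoint (Vhat N) \<in> carrier_mat N N" by (rule adj_carrier[OF Vhat_carrier])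
  moreover have "Chatmat N m \<in> carrier_mat N N" by (simp add: Chatmat_def)
  ultimately show ?thesis unfolding Qhat_def using Vhat_carrier by (metis mult_carrier_mat)
qed

definition wfx :: "(nat \<Rightarrow> complex) \<Rightarrow> nat \<Rightarrow> complex vec \<Rightarrow> complex" where
  "wfx u n x = (\<Sum>b<n. u b * x $ b)"

lemma dbl: "(\<Sum>a<n. \<Sum>b<n. cnj (x a) * (c * cnj (u a) * u b) * x b)
   = c * (cnj (\<Sum>a<n. u a * x a) * (\<Sum>b<n. u b * x b))"
proof -
  have "cnj (\<Sum>a<n. u a * x a) * (\<Sum>b<n. u b * x b) = (\<Sum>a<n. \<Sum>b<n. cnj (u a * x a) * (u b * x b))"
    by (simp add: cnj_sum sum_product)
  hence "c * (cnj (\<Sum>a<n. u a * x a) * (\<Sum>b<n. u b * x b)) = (\<Sum>a<n. \<Sum>b<n. c * (cnj (u a * x a) * (u b * x b)))"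
    by (simp add: sum_distrib_left)
  also have "\<dots> = (\<Sum>a<n. \<Sum>b<n. cnj (x a) * (c * cnj (u a) * u b) * x b)"
    by (intro sum.cong refl) (simp add: ac_simps)
  finally show ?thesis by simp
qed

lemma wsum: assumes "finite M"
  shows "(\<Sum>a<n. \<Sum>b<n. cnj (x a) * (\<Sum>m\<in>M. d m * cnj (u m a) * u m b) * x b)
   = (\<Sum>m\<in>M. d m * (cnj (\<Sum>a<n. u m a * x a) * (\<Sum>b<n. u m b * x b)))"
proof -
  have "(\<Sum>a<n. \<Sum>b<n. cnj (x a) * (\<Sum>m\<in>M. d m * cnj (u m a) * u m b) * x b)
      = (\<Sum>a<n. \<Sum>b<n. \<Sum>m\<in>M. cnj (x a) * (d m * cnj (u m a) * u m b) * x b)"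
    by (simp add: sum_distrib_left sum_distrib_right)
  also have "\<dots> = (\<Sum>a<n. \<Sum>m\<in>M. \<Sum>b<n. cnj (x a) * (d m * cnj (u m a) * u m b) * x b)"
    by (intro sum.cong refl, rule sum.swap)
  also have "\<dots> = (\<Sum>m\<in>M. \<Sum>a<n. \<Sum>b<n. cnj (x a) * (d m * cnj (u m a) * u m b) * x b)"
    by (rule sum.swap)
  also have "\<dots> = (\<Sum>m\<in>M. d m * (cnj (\<Sum>a<n. u m a * x a) * (\<Sum>b<n. u m b * x b)))"
    by (intro sum.cong refl) (rule dbl)
  finally show ?thesis .
qed

lemma qfQ: assumes m: "1 \<le> m" "m \<le> N" and x: "x \<in> carrier_vec N"
  shows "qf (Qmat N m) x = of_real (cval N m * (cmod (wfx (vv N (m-1)) N x))^2)"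
proof -
  have "qf (Qmat N m) x = (\<Sum>a<N. \<Sum>b<N. cnj (x$a) * (of_real (cval N m) * cnj (vv N (m-1) a) * vv N (m-1) b) * x$b)"
    unfolding qf_sum[OF Q_carrier x] using m by (intro sum.cong refl) (simp add: Q_idx)
  also have "\<dots> = of_real (cval N m) * (cnj (wfx (vv N (m-1)) N x) * wfx (vv N (m-1)) N x)"
    unfolding dbl wfx_def ..
  finally show ?thesis by (simp add: cnj_mult_self)
qed

lemma qfQh: assumes m: "1 \<le> m" "m \<le> N" and x: "x \<in> carrier_vec N"
  shows "qf (Qhat N m) x = of_real (chat N m * (cmod (wfx (vh N (m-1)) N x))^2)"
proof -
  have "qf (Qhat N m) x = (\<Sum>a<N. \<Sum>b<N. cnj (x$a) * (of_real (chat N m) * cnj (vh N (m-1) a) * vh N (m-1) b) * x$b)"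
    unfolding qf_sum[OF Qh_carrier x] using m by (intro sum.cong refl) (simp add: Qh_idx)
  also have "\<dots> = of_real (chat N m) * (cnj (wfx (vh N (m-1)) N x) * wfx (vh N (m-1)) N x)"
    unfolding dbl wfx_def ..
  finally show ?thesis by (simp add: cnj_mult_self)
qed


lemma sum_shift1: fixes N :: nat shows "(\<Sum>m\<in>{1..N}. g (m - 1)) = (\<Sum>m<N. (g m :: 'a :: comm_monoid_add))"
proof -
  have "(\<Sum>m\<in>{1..N}. g (m - 1)) = (\<Sum>m\<in>Suc ` {..<N}. g (m - 1))"
    by (simp add: image_Suc_lessThan)
  also have "\<dots> = (\<Sum>m<N. g m)" by (subst sum.reindex) auto
  finally show ?thesis .
qed

lemma cval_nonneg: "cval N m \<ge> 0"
proof -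
  have "1 + 1/2 * cos (2 * pi * (real m / real N)) \<ge> 0" using cos_ge_minus_one[of "2 * pi * (real m / real N)"] by linarith
  thus ?thesis unfolding cval_def by simp
qed

lemma chat_nonneg: "chat N m \<ge> 0"
proof -
  have "1 + 1/2 * cos (2 * pi * (real m / real N + 1 / (2 * real N))) \<ge> 0"
    using cos_ge_minus_one[of "2 * pi * (real m / real N + 1 / (2 * real N))"] by linarith
  thus ?thesis unfolding chat_def by simp
qed

lemma lam_eq: assumes hs: "\<forall>k\<in>{1..K} - {i}. s k \<in> carrier_vec N" and m: "m \<in> {1..N}"
  shows "lam N K i s m = cval N m * (\<Sum>k\<in>{1..K} - {i}. cval N m * (cmod (wfx (vv N (m-1)) N (s k)))^2)"
  unfolding lam_def using m hs by (intro arg_cong[where f="(*) (cval N m)"] sum.cong refl) (simp add: qfQ)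

lemma lamhat_eq: assumes hs: "\<forall>k\<in>{1..K} - {i}. s k \<in> carrier_vec N" and m: "m \<in> {1..N}"
  shows "lamhat N K i s m = chat N m * (\<Sum>k\<in>{1..K} - {i}. chat N m * (cmod (wfx (vh N (m-1)) N (s k)))^2)"
  unfolding lamhat_def using m hs by (intro arg_cong[where f="(*) (chat N m)"] sum.cong refl) (simp add: qfQh)

lemma lam_nonneg: assumes hs: "\<forall>k\<in>{1..K} - {i}. s k \<in> carrier_vec N" and m: "m \<in> {1..N}"
  shows "lam N K i s m \<ge> 0"
  unfolding lam_eq[OF hs m] using cval_nonneg by (intro mult_nonneg_nonneg sum_nonneg) auto

lemma lamhat_nonneg: assumes hs: "\<forall>k\<in>{1..K} - {i}. s k \<in> carrier_vec N" and m: "m \<in> {1..N}"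
  shows "lamhat N K i s m \<ge> 0"
  unfolding lamhat_eq[OF hs m] using chat_nonneg by (intro mult_nonneg_nonneg sum_nonneg) auto

lemma Sigma_part: assumes hs: "\<forall>k\<in>{1..K} - {i}. s k \<in> carrier_vec N" and m: "m \<in> {1..N}"
  and ab: "a < N" "b < N"
  shows "(\<Sum>k\<in>{1..K} - {i}. qf (Qmat N m) (s k) * Qmat N m $$ (a, b))
       = of_real (lam N K i s m) * cnj (vv N (m-1) a) * vv N (m-1) b"
proof -
  have "(\<Sum>k\<in>{1..K} - {i}. qf (Qmat N m) (s k) * Qmat N m $$ (a, b))
      = (\<Sum>k\<in>{1..K} - {i}. of_real (cval N m * (cmod (wfx (vv N (m-1)) N (s k)))^2)) * Qmat N m $$ (a, b)"
    unfolding sum_distrib_right using hs m by (intro sum.cong refl) (simp add: qfQ)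
  also have "\<dots> = of_real (\<Sum>k\<in>{1..K} - {i}. cval N m * (cmod (wfx (vv N (m-1)) N (s k)))^2) * (of_real (cval N m) * cnj (vv N (m-1) a) * vv N (m-1) b)"
    using Q_idx[of m N a b] m ab by (simp only: of_real_sum) simp
  also have "\<dots> = of_real (lam N K i s m) * cnj (vv N (m-1) a) * vv N (m-1) b"
    unfolding lam_eq[OF hs m] by (simp add: ac_simps)
  finally show ?thesis .
qed

lemma Sigmah_part: assumes hs: "\<forall>k\<in>{1..K} - {i}. s k \<in> carrier_vec N" and m: "m \<in> {1..N}"
  and ab: "a < N" "b < N"
  shows "(\<Sum>k\<in>{1..K} - {i}. qf (Qhat N m) (s k) * Qhat N m $$ (a, b))
       = of_real (lamhat N K i s m) * cnj (vh N (m-1) a) * vh N (m-1) b"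
proof -
  have "(\<Sum>k\<in>{1..K} - {i}. qf (Qhat N m) (s k) * Qhat N m $$ (a, b))
      = (\<Sum>k\<in>{1..K} - {i}. of_real (chat N m * (cmod (wfx (vh N (m-1)) N (s k)))^2)) * Qhat N m $$ (a, b)"
    unfolding sum_distrib_right using hs m by (intro sum.cong refl) (simp add: qfQh)
  also have "\<dots> = of_real (\<Sum>k\<in>{1..K} - {i}. chat N m * (cmod (wfx (vh N (m-1)) N (s k)))^2) * (of_real (chat N m) * cnj (vh N (m-1) a) * vh N (m-1) b)"
    using Qh_idx[of m N a b] m ab by (simp only: of_real_sum) simp
  also have "\<dots> = of_real (lamhat N K i s m) * cnj (vh N (m-1) a) * vh N (m-1) b"
    unfolding lamhat_eq[OF hs m] by (simp add: ac_simps)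
  finally show ?thesis .
qed

lemma Sigma_idx: assumes hs: "\<forall>k\<in>{1..K} - {i}. s k \<in> carrier_vec N" and ab: "a < N" "b < N"
  shows "Sigma_i N K i s $$ (a,b) =
     (\<Sum>m\<in>{1..N}. of_real (lam N K i s m) * cnj (vv N (m-1) a) * vv N (m-1) b)
   + (\<Sum>m\<in>{1..N}. of_real (lamhat N K i s m) * cnj (vh N (m-1) a) * vh N (m-1) b)"
proof -
  have "Sigma_i N K i s $$ (a,b) = (\<Sum>k\<in>{1..K} - {i}. \<Sum>m\<in>{1..N}.
      qf (Qmat N m) (s k) * Qmat N m $$ (a, b) + qf (Qhat N m) (s k) * Qhat N m $$ (a, b))"
    using ab by (simp add: Sigma_i_def)
  also have "\<dots> = (\<Sum>m\<in>{1..N}. \<Sum>k\<in>{1..K} - {i}.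
      qf (Qmat N m) (s k) * Qmat N m $$ (a, b) + qf (Qhat N m) (s k) * Qhat N m $$ (a, b))"
    by (rule sum.swap)
  also have "\<dots> = (\<Sum>m\<in>{1..N}. (\<Sum>k\<in>{1..K} - {i}. qf (Qmat N m) (s k) * Qmat N m $$ (a, b))
      + (\<Sum>k\<in>{1..K} - {i}. qf (Qhat N m) (s k) * Qhat N m $$ (a, b)))"
    by (simp add: sum.distrib)
  also have "\<dots> = (\<Sum>m\<in>{1..N}. of_real (lam N K i s m) * cnj (vv N (m-1) a) * vv N (m-1) b
      + of_real (lamhat N K i s m) * cnj (vh N (m-1) a) * vh N (m-1) b)"
    using Sigma_part[OF hs _ ab] Sigmah_part[OF hs _ ab] by (intro sum.cong refl) auto
  finally show ?thesis by (simp add: sum.distrib)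
qed

lemma Sigma_carrier: "Sigma_i N K i s \<in> carrier_mat N N"
  by (simp add: Sigma_i_def)

lemma Sigma_herm: assumes hs: "\<forall>k\<in>{1..K} - {i}. s k \<in> carrier_vec N"
  shows "herm (Sigma_i N K i s) N"
proof -
  have "Sigma_i N K i s $$ (a,b) = cnj (Sigma_i N K i s $$ (b,a))" if ab: "a < N" "b < N" for a b
    unfolding Sigma_idx[OF hs ab] Sigma_idx[OF hs ab(2,1)]
    by (simp add: cnj_sum ac_simps)
  thus ?thesis unfolding herm_def using Sigma_carrier by blast
qed

definition Ff :: "nat \<Rightarrow> nat \<Rightarrow> nat \<Rightarrow> (nat \<Rightarrow> complex vec) \<Rightarrow> complex vec \<Rightarrow> real" where
  "Ff N K i s x = (\<Sum>m\<in>{1..N}. lam N K i s m * (cmod (wfx (vv N (m-1)) N x))^2)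
     + (\<Sum>m\<in>{1..N}. lamhat N K i s m * (cmod (wfx (vh N (m-1)) N x))^2)"

lemma qf_Sigma: assumes hs: "\<forall>k\<in>{1..K} - {i}. s k \<in> carrier_vec N" and x: "x \<in> carrier_vec N"
  shows "qf (Sigma_i N K i s) x = of_real (Ff N K i s x)"
proof -
  let ?A = "\<lambda>a b. (\<Sum>m\<in>{1..N}. of_real (lam N K i s m) * cnj (vv N (m-1) a) * vv N (m-1) b)"
  let ?B = "\<lambda>a b. (\<Sum>m\<in>{1..N}. of_real (lamhat N K i s m) * cnj (vh N (m-1) a) * vh N (m-1) b)"
  have "qf (Sigma_i N K i s) x = (\<Sum>a<N. \<Sum>b<N. cnj (x$a) * (?A a b + ?B a b) * x$b)"
    unfolding qf_sum[OF Sigma_carrier x] by (intro sum.cong refl) (simp add: Sigma_idx[OF hs])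
  also have "\<dots> = (\<Sum>a<N. \<Sum>b<N. cnj (x$a) * ?A a b * x$b) + (\<Sum>a<N. \<Sum>b<N. cnj (x$a) * ?B a b * x$b)"
    by (simp add: sum.distrib distrib_left distrib_right)
  also have "(\<Sum>a<N. \<Sum>b<N. cnj (x$a) * ?A a b * x$b)
     = (\<Sum>m\<in>{1..N}. of_real (lam N K i s m) * (cnj (wfx (vv N (m-1)) N x) * wfx (vv N (m-1)) N x))"
    unfolding wfx_def by (rule wsum[where M="{1..N}" and n=N and x="\<lambda>a. x$a" and d="\<lambda>m. of_real (lam N K i s m)" and u="\<lambda>m a. vv N (m-1) a"]) simp
  also have "(\<Sum>a<N. \<Sum>b<N. cnj (x$a) * ?B a b * x$b)
     = (\<Sum>m\<in>{1..N}. of_real (lamhat N K i s m) * (cnj (wfx (vh N (m-1)) N x) * wfx (vh N (m-1)) N x))"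
    unfolding wfx_def by (rule wsum[where M="{1..N}" and n=N and x="\<lambda>a. x$a" and d="\<lambda>m. of_real (lamhat N K i s m)" and u="\<lambda>m a. vh N (m-1) a"]) simp
  finally show ?thesis unfolding Ff_def by (simp add: cnj_mult_self)
qed

lemma parseval: assumes cols: "\<And>a b. a < N \<Longrightarrow> b < N \<Longrightarrow> (\<Sum>m<N. cnj (u m a) * u m b) = (if a = b then 1 else 0)"
  and x: "x \<in> carrier_vec N"
  shows "(\<Sum>m<N. (cmod (wfx (u m) N x))^2) = nrm2 N x"
proof -
  have "complex_of_real (\<Sum>m<N. (cmod (wfx (u m) N x))^2) = (\<Sum>m<N. 1 * (cnj (wfx (u m) N x) * wfx (u m) N x))"
    by (simp add: cnj_mult_self)
  also have "\<dots> = (\<Sum>a<N. \<Sum>b<N. cnj (x$a) * (\<Sum>m<N. 1 * cnj (u m a) * u m b) * x$b)"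
    unfolding wfx_def by (rule wsum[where M="{..<N}" and n=N and x="\<lambda>a. x$a" and d="\<lambda>m. 1" and u=u, symmetric]) simp
  also have "\<dots> = (\<Sum>a<N. \<Sum>b<N. if a = b then cnj (x$a) * x$b else 0)"
    using cols by (intro sum.cong refl) auto
  also have "\<dots> = (\<Sum>a<N. cnj (x$a) * x$a)" by (simp add: sum.delta)
  also have "\<dots> = of_real (nrm2 N x)" unfolding nrm2_def by (rule sum_cnj_self)
  finally show ?thesis by (simp only: of_real_eq_iff)
qed

lemma parseval_vv: assumes "N > 0" "x \<in> carrier_vec N"
  shows "(\<Sum>m\<in>{1..N}. (cmod (wfx (vv N (m-1)) N x))^2) = nrm2 N x"
  unfolding sum_shift1[of "\<lambda>m. (cmod (wfx (vv N m) N x))^2"]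
  by (rule parseval[OF vv_cols[OF assms(1)] assms(2)])

lemma parseval_vh: assumes "N > 0" "x \<in> carrier_vec N"
  shows "(\<Sum>m\<in>{1..N}. (cmod (wfx (vh N (m-1)) N x))^2) = nrm2 N x"
  unfolding sum_shift1[of "\<lambda>m. (cmod (wfx (vh N m) N x))^2"]
  by (rule parseval[OF vh_cols[OF assms(1)] assms(2)])

lemma tv_wf: assumes rows: "\<And>m m'. m < N \<Longrightarrow> m' < N \<Longrightarrow> (\<Sum>b<N. u m b * cnj (u m' b)) = (if m = m' then 1 else 0)"
  and m0: "m0 < N" and m: "m < N"
  shows "wfx (u m) N (vec N (\<lambda>b. c * cnj (u m0 b))) = (if m = m0 then c else 0)"
proof -
  have "wfx (u m) N (vec N (\<lambda>b. c * cnj (u m0 b))) = (\<Sum>b<N. c * (u m b * cnj (u m0 b)))"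
    unfolding wfx_def by (intro sum.cong refl) (simp add: ac_simps)
  also have "\<dots> = c * (\<Sum>b<N. u m b * cnj (u m0 b))" by (simp add: sum_distrib_left)
  also have "\<dots> = (if m = m0 then c else 0)" using rows[OF m m0] by simp
  finally show ?thesis .
qed

lemma tv_nrm: assumes rows: "\<And>m m'. m < N \<Longrightarrow> m' < N \<Longrightarrow> (\<Sum>b<N. u m b * cnj (u m' b)) = (if m = m' then 1 else 0)"
  and m0: "m0 < N"
  shows "nrm2 N (vec N (\<lambda>b. complex_of_real r * cnj (u m0 b))) = r^2"
proof -
  have "complex_of_real (\<Sum>b<N. (cmod (u m0 b))^2) = (\<Sum>b<N. u m0 b * cnj (u m0 b))"
    unfolding of_real_sum by (intro sum.cong refl) (metis cnj_mult_self mult.commute)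
  also have "\<dots> = 1" using rows[OF m0 m0] by simp
  finally have 1: "(\<Sum>b<N. (cmod (u m0 b))^2) = 1" by (simp only: of_real_eq_1_iff)
  have "nrm2 N (vec N (\<lambda>b. complex_of_real r * cnj (u m0 b))) = (\<Sum>b<N. r^2 * (cmod (u m0 b))^2)"
    unfolding nrm2_def by (intro sum.cong refl) (simp add: norm_mult power_mult_distrib)
  also have "\<dots> = r^2" using 1 by (simp add: sum_distrib_left[symmetric])
  finally show ?thesis .
qed

lemma wsum_le: assumes "\<And>m. m \<in> S \<Longrightarrow> f m \<le> (M0::real)" "\<And>m. m \<in> S \<Longrightarrow> g m \<ge> 0"
  shows "(\<Sum>m\<in>S. f m * g m) \<le> M0 * (\<Sum>m\<in>S. g m)"
  unfolding sum_distrib_left by (rule sum_mono) (use assms in \<open>auto intro: mult_right_mono\<close>)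

lemma wsum_ge: assumes "\<And>m. m \<in> S \<Longrightarrow> f m \<ge> (M0::real)" "\<And>m. m \<in> S \<Longrightarrow> g m \<ge> 0"
  shows "(\<Sum>m\<in>S. f m * g m) \<ge> M0 * (\<Sum>m\<in>S. g m)"
  unfolding sum_distrib_left by (rule sum_mono) (use assms in \<open>auto intro: mult_right_mono\<close>)

lemma Ff_lower: assumes N: "N > 0" and x: "x \<in> carrier_vec N"
  and l: "\<And>m. m \<in> {1..N} \<Longrightarrow> lam N K i s m \<ge> l0" and h: "\<And>m. m \<in> {1..N} \<Longrightarrow> lamhat N K i s m \<ge> h0"
  shows "(l0 + h0) * nrm2 N x \<le> Ff N K i s x"
proof -
  have "l0 * nrm2 N x \<le> (\<Sum>m\<in>{1..N}. lam N K i s m * (cmod (wfx (vv N (m-1)) N x))^2)"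
    unfolding parseval_vv[OF N x, symmetric] by (rule wsum_ge) (use l in auto)
  moreover have "h0 * nrm2 N x \<le> (\<Sum>m\<in>{1..N}. lamhat N K i s m * (cmod (wfx (vh N (m-1)) N x))^2)"
    unfolding parseval_vh[OF N x, symmetric] by (rule wsum_ge) (use h in auto)
  ultimately show ?thesis unfolding Ff_def by (simp add: distrib_right)
qed

lemma Ff_test1: assumes N: "N > 0" and m0: "m0 \<in> {1..N}"
  and h: "\<And>m. m \<in> {1..N} \<Longrightarrow> lamhat N K i s m \<le> h1"
  defines "x \<equiv> vec N (\<lambda>b. complex_of_real (sqrt (real N)) * cnj (vv N (m0-1) b))"
  shows "x \<in> carrier_vec N" "nrm2 N x = real N" "Ff N K i s x \<le> real N * (lam N K i s m0 + h1)"
proof -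
  show x: "x \<in> carrier_vec N" unfolding x_def by simp
  have rows: "\<And>m m'. m < N \<Longrightarrow> m' < N \<Longrightarrow> (\<Sum>b<N. vv N m b * cnj (vv N m' b)) = (if m = m' then 1 else 0)"
    by (rule vv_rows[OF N])
  have m0': "m0 - 1 < N" using m0 by auto
  show nx: "nrm2 N x = real N" using tv_nrm[OF rows m0', of "sqrt (real N)"] unfolding x_def by simp
  have "(\<Sum>m\<in>{1..N}. lam N K i s m * (cmod (wfx (vv N (m-1)) N x))^2)
      = (\<Sum>m\<in>{1..N}. if m = m0 then lam N K i s m * real N else 0)"
  proof (intro sum.cong refl)
    fix m assume m: "m \<in> {1..N}"
    hence "m - 1 < N" by auto
    hence "wfx (vv N (m-1)) N x = (if m - 1 = m0 - 1 then complex_of_real (sqrt (real N)) else 0)"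
      unfolding x_def using tv_wf[of N "vv N" "m0 - 1" "m - 1" "complex_of_real (sqrt (real N))", OF rows m0'] by simp
    moreover have "(m - 1 = m0 - 1) = (m = m0)" using m m0 by auto
    ultimately show "lam N K i s m * (cmod (wfx (vv N (m-1)) N x))^2 = (if m = m0 then lam N K i s m * real N else 0)"
      by simp
  qed
  also have "\<dots> = lam N K i s m0 * real N" using m0 by (simp add: sum.delta')
  finally have 1: "(\<Sum>m\<in>{1..N}. lam N K i s m * (cmod (wfx (vv N (m-1)) N x))^2) = lam N K i s m0 * real N" .
  have "(\<Sum>m\<in>{1..N}. lamhat N K i s m * (cmod (wfx (vh N (m-1)) N x))^2) \<le> h1 * nrm2 N x"
    unfolding parseval_vh[OF N x, symmetric] by (rule wsum_le) (use h in auto)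
  thus "Ff N K i s x \<le> real N * (lam N K i s m0 + h1)" unfolding Ff_def 1 nx by (simp add: algebra_simps)
qed

lemma Ff_test2: assumes N: "N > 0" and m0: "m0 \<in> {1..N}"
  and l: "\<And>m. m \<in> {1..N} \<Longrightarrow> lam N K i s m \<le> l1"
  defines "x \<equiv> vec N (\<lambda>b. complex_of_real (sqrt (real N)) * cnj (vh N (m0-1) b))"
  shows "x \<in> carrier_vec N" "nrm2 N x = real N" "Ff N K i s x \<le> real N * (l1 + lamhat N K i s m0)"
proof -
  show x: "x \<in> carrier_vec N" unfolding x_def by simp
  have rows: "\<And>m m'. m < N \<Longrightarrow> m' < N \<Longrightarrow> (\<Sum>b<N. vh N m b * cnj (vh N m' b)) = (if m = m' then 1 else 0)"
    by (rule vh_rows[OF N])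
  have m0': "m0 - 1 < N" using m0 by auto
  show nx: "nrm2 N x = real N" using tv_nrm[OF rows m0', of "sqrt (real N)"] unfolding x_def by simp
  have "(\<Sum>m\<in>{1..N}. lamhat N K i s m * (cmod (wfx (vh N (m-1)) N x))^2)
      = (\<Sum>m\<in>{1..N}. if m = m0 then lamhat N K i s m * real N else 0)"
  proof (intro sum.cong refl)
    fix m assume m: "m \<in> {1..N}"
    hence "m - 1 < N" by auto
    hence "wfx (vh N (m-1)) N x = (if m - 1 = m0 - 1 then complex_of_real (sqrt (real N)) else 0)"
      unfolding x_def using tv_wf[of N "vh N" "m0 - 1" "m - 1" "complex_of_real (sqrt (real N))", OF rows m0'] by simp
    moreover have "(m - 1 = m0 - 1) = (m = m0)" using m m0 by auto
    ultimately show "lamhat N K i s m * (cmod (wfx (vh N (m-1)) N x))^2 = (if m = m0 then lamhat N K i s m * real N else 0)"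
      by simp
  qed
  also have "\<dots> = lamhat N K i s m0 * real N" using m0 by (simp add: sum.delta')
  finally have 1: "(\<Sum>m\<in>{1..N}. lamhat N K i s m * (cmod (wfx (vh N (m-1)) N x))^2) = lamhat N K i s m0 * real N" .
  have "(\<Sum>m\<in>{1..N}. lam N K i s m * (cmod (wfx (vv N (m-1)) N x))^2) \<le> l1 * nrm2 N x"
    unfolding parseval_vv[OF N x, symmetric] by (rule wsum_le) (use l in auto)
  thus "Ff N K i s x \<le> real N * (l1 + lamhat N K i s m0)" unfolding Ff_def 1 nx by (simp add: algebra_simps)
qed

lemma Sm_sum: assumes hs: "\<forall>k\<in>{1..K} - {i}. s k \<in> carrier_vec N" and x: "x \<in> carrier_vec N"
  shows "(\<Sum>k\<in>{1..K} - {i}. \<Sum>m\<in>{1..N}. Sm N m x (s k)) = Ff N K i s x"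
proof -
  have "(\<Sum>k\<in>{1..K} - {i}. \<Sum>m\<in>{1..N}. Sm N m x (s k))
     = (\<Sum>m\<in>{1..N}. \<Sum>k\<in>{1..K} - {i}. Sm N m x (s k))" by (rule sum.swap)
  also have "\<dots> = (\<Sum>m\<in>{1..N}. lam N K i s m * (cmod (wfx (vv N (m-1)) N x))^2
      + lamhat N K i s m * (cmod (wfx (vh N (m-1)) N x))^2)"
  proof (intro sum.cong refl)
    fix m assume m: "m \<in> {1..N}"
    have "Sm N m x (s k) = (cmod (wfx (vv N (m-1)) N x))^2 * (cval N m * (cval N m * (cmod (wfx (vv N (m-1)) N (s k)))^2))
       + (cmod (wfx (vh N (m-1)) N x))^2 * (chat N m * (chat N m * (cmod (wfx (vh N (m-1)) N (s k)))^2))"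
      if k: "k \<in> {1..K} - {i}" for k
    proof -
      have sk: "s k \<in> carrier_vec N" using hs k by auto
      show ?thesis unfolding Sm_def using m
        by (simp add: qfQ[OF _ _ x] qfQ[OF _ _ sk] qfQh[OF _ _ x] qfQh[OF _ _ sk] del: of_real_power)
    qed
    hence "(\<Sum>k\<in>{1..K} - {i}. Sm N m x (s k)) =
        (cmod (wfx (vv N (m-1)) N x))^2 * (cval N m * (\<Sum>k\<in>{1..K} - {i}. cval N m * (cmod (wfx (vv N (m-1)) N (s k)))^2))
      + (cmod (wfx (vh N (m-1)) N x))^2 * (chat N m * (\<Sum>k\<in>{1..K} - {i}. chat N m * (cmod (wfx (vh N (m-1)) N (s k)))^2))"
      by (simp add: sum.distrib sum_distrib_left)
    thus "(\<Sum>k\<in>{1..K} - {i}. Sm N m x (s k)) = lam N K i s m * (cmod (wfx (vv N (m-1)) N x))^2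
      + lamhat N K i s m * (cmod (wfx (vh N (m-1)) N x))^2"
      unfolding lam_eq[OF hs m] lamhat_eq[OF hs m] by simp
  qed
  also have "\<dots> = Ff N K i s x" unfolding Ff_def by (simp add: sum.distrib)
  finally show ?thesis .
qed

theorem mainTheorem2:
  fixes N K i :: nat and N0 P T :: real and s :: "nat \<Rightarrow> complex vec"
  assumes "N \<ge> 2" and "K \<ge> 2" and "N0 > 0" and "P > 0" and "T > 0"
    and "i \<in> {1..K}"
    and "\<And>k. k \<in> {1..K} - {i} \<Longrightarrow> s k \<in> carrier_vec N"
  defines "lmin \<equiv> Min (lam N K i s ` {1..N})"
    and "lmax \<equiv> Max (lam N K i s ` {1..N})"
    and "hmin \<equiv> Min (lamhat N K i s ` {1..N})"
    and "hmax \<equiv> Max (lamhat N K i s ` {1..N})"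
    and "\<gamma> \<equiv> min (Min (lam N K i s ` {1..N}) + Max (lamhat N K i s ` {1..N})) (Max (lam N K i s ` {1..N}) + Min (lamhat N K i s ` {1..N}))"
  shows "lmin + hmin \<le> min_eig (Sigma_i N K i s)
      \<and> min_eig (Sigma_i N K i s) \<le> \<gamma>
      \<and> (\<gamma> / (6 * real N) + N0 / (2 * P * T)) powr (-1/2) \<le> SINR_star N K i s N0 P T
      \<and> SINR_star N K i s N0 P T \<le> (1 / (6 * real N) * (lmin + hmin) + N0 / (2 * P * T)) powr (-1/2)"
proof -
  have N: "N > 0" using assms(1) by simp
  have hs: "\<forall>k\<in>{1..K} - {i}. s k \<in> carrier_vec N" using assms(7) by blast
  have g_def: "\<gamma> = min (lmin + hmax) (lmax + hmin)" unfolding \<gamma>_def lmin_def lmax_def hmin_def hmax_def ..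
  define Sg where "Sg = Sigma_i N K i s"
  have H: "herm Sg N" unfolding Sg_def by (rule Sigma_herm[OF hs])
  have Sg: "Sg \<in> carrier_mat N N" unfolding Sg_def by (rule Sigma_carrier)
  have fin: "finite {1..N}" and ne: "{1..N} \<noteq> {}" using N by auto
  have l_lo: "lmin \<le> lam N K i s m" and l_hi: "lam N K i s m \<le> lmax"
    and h_lo: "hmin \<le> lamhat N K i s m" and h_hi: "lamhat N K i s m \<le> hmax" if m: "m \<in> {1..N}" for m
    using m fin by (auto simp: lmin_def lmax_def hmin_def hmax_def)
  have "lmin \<in> lam N K i s ` {1..N}" unfolding lmin_def using fin ne by (intro Min_in) auto
  then obtain m1 where m1: "m1 \<in> {1..N}" "lam N K i s m1 = lmin" by (metis imageE)
  have "hmin \<in> lamhat N K i s ` {1..N}" unfolding hmin_def using fin ne by (intro Min_in) auto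
  then obtain m2 where m2: "m2 \<in> {1..N}" "lamhat N K i s m2 = hmin" by (metis imageE)
  have lmin0: "lmin \<ge> 0" using lam_nonneg[OF hs m1(1)] m1(2) by simp
  have hmin0: "hmin \<ge> 0" using lamhat_nonneg[OF hs m2(1)] m2(2) by simp
  have lower: "(lmin + hmin) * nrm2 N x \<le> Ff N K i s x" if x: "x \<in> carrier_vec N" for x
    by (rule Ff_lower[OF N x]) (auto intro: l_lo h_lo)
  have Ff0: "Ff N K i s x \<ge> 0" if x: "x \<in> carrier_vec N" for x
    using lower[OF x] lmin0 hmin0 nrm2_nonneg[of N x] by (meson add_nonneg_nonneg mult_nonneg_nonneg order_trans)
  have qfS: "Re (qf Sg x) = Ff N K i s x" if x: "x \<in> carrier_vec N" for x
    unfolding Sg_def qf_Sigma[OF hs x] by simp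
  obtain x0 where x0: "x0 \<in> carrier_vec N" "nrm2 N x0 = real N" "Ff N K i s x0 \<le> real N * \<gamma>"
  proof (cases "lmin + hmax \<le> lmax + hmin")
    case True
    note t = Ff_test1[OF N m1(1) h_hi]
    have "Ff N K i s (vec N (\<lambda>b. complex_of_real (sqrt (real N)) * cnj (vv N (m1-1) b))) \<le> real N * \<gamma>"
      using t(3) m1(2) True unfolding g_def by auto
    thus ?thesis using that t(1,2) by blast
  next
    case False
    note t = Ff_test2[OF N m2(1) l_hi]
    have "Ff N K i s (vec N (\<lambda>b. complex_of_real (sqrt (real N)) * cnj (vh N (m2-1) b))) \<le> real N * \<gamma>"
      using t(3) m2(2) False unfolding g_def by auto
    thus ?thesis using that t(1,2) by blast
  qed
  define E where "E = {x::real. eigenvalue Sg (of_real x)}"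
  have finE: "finite E" unfolding E_def by (rule fin_eig[OF Sg])
  have nx0: "nrm2 N x0 > 0" using x0(2) N by simp
  obtain \<mu>0 where mu0: "eigenvalue Sg (of_real \<mu>0)" "\<mu>0 * nrm2 N x0 \<le> Re (qf Sg x0)"
    using rayleigh_eig[OF H N x0(1) nx0] by blast
  have "\<mu>0 * real N \<le> real N * \<gamma>" using mu0(2) qfS[OF x0(1)] x0 by simp
  hence mu0g: "\<mu>0 \<le> \<gamma>" using N by (simp add: mult.commute)
  have mu0E: "\<mu>0 \<in> E" using mu0(1) E_def by simp
  have me: "min_eig Sg = Min E" unfolding min_eig_def E_def ..
  have part2: "min_eig Sg \<le> \<gamma>" unfolding me using Min_le[OF finE mu0E] mu0g by linarith
  have part1: "lmin + hmin \<le> min_eig Sg"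
  proof -
    have "Min E \<in> E" using Min_in[OF finE] mu0E by blast
    then obtain v where v: "v \<in> carrier_vec N" "v \<noteq> 0\<^sub>v N" "Sg *\<^sub>v v = of_real (Min E) \<cdot>\<^sub>v v"
      unfolding E_def eigenvalue_def eigenvector_def using Sg by auto
    have "qf Sg v = of_real (Min E) * of_real (nrm2 N v)" by (rule qf_eig[OF Sg v(1) v(3)])
    hence "Min E * nrm2 N v = Ff N K i s v" using qfS[OF v(1)] by simp
    hence "(lmin + hmin) * nrm2 N v \<le> Min E * nrm2 N v" using lower[OF v(1)] by simp
    thus ?thesis unfolding me using nrm2_pos[OF v(1,2)] by simp
  qed
  define c0 where "c0 = N0 / (2 * P * T)"
  have c0: "c0 > 0" unfolding c0_def using assms(3-5) by simp
  define S where "S = {si \<in> carrier_vec N. (\<Sum>j<N. (cmod (si $ j))\<^sup>2) = real N}"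
  define g where "g = (\<lambda>si. (1 / (6 * real N ^ 2) * (\<Sum>k\<in>{1..K} - {i}. \<Sum>m\<in>{1..N}. Sm N m si (s k)) + c0) powr (-1/2))"
  have SINR: "SINR_star N K i s N0 P T = (SUP si\<in>S. g si)"
    unfolding SINR_star_def S_def g_def c0_def ..
  have gS: "g si = (Ff N K i s si / (6 * real N ^ 2) + c0) powr (-1/2)" if "si \<in> carrier_vec N" for si
    unfolding g_def Sm_sum[OF hs that] by simp
  have x0S: "x0 \<in> S" using x0 unfolding S_def nrm2_def by simp
  have bdd: "bdd_above (g ` S)"
  proof (rule bdd_aboveI2)
    fix si assume "si \<in> S"
    hence si: "si \<in> carrier_vec N" unfolding S_def by simp
    have le: "c0 \<le> Ff N K i s si / (6 * real N ^ 2) + c0" using Ff0[OF si] by simp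
    have "(Ff N K i s si / (6 * real N ^ 2) + c0) powr (-1/2) \<le> c0 powr (-1/2)"
      by (rule powr_mono2'[OF _ c0 le]) simp
    thus "g si \<le> c0 powr (-1/2)" using gS[OF si] by simp
  qed
  have part3: "(\<gamma> / (6 * real N) + c0) powr (-1/2) \<le> SINR_star N K i s N0 P T"
    unfolding SINR
  proof (rule cSUP_upper2[OF bdd x0S])
    have "Ff N K i s x0 / (6 * real N ^ 2) \<le> real N * \<gamma> / (6 * real N ^ 2)"
      using x0(3) N by (simp add: divide_right_mono)
    also have "\<dots> = \<gamma> / (6 * real N)" using N by (simp add: power2_eq_square)
    finally have le: "Ff N K i s x0 / (6 * real N ^ 2) + c0 \<le> \<gamma> / (6 * real N) + c0" by simp
    have pos: "0 < Ff N K i s x0 / (6 * real N ^ 2) + c0"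
      by (intro add_nonneg_pos divide_nonneg_nonneg) (use Ff0[OF x0(1)] c0 in auto)
    show "(\<gamma> / (6 * real N) + c0) powr (-1/2) \<le> g x0"
      unfolding gS[OF x0(1)] by (rule powr_mono2'[OF _ pos le]) simp
  qed
  have part4: "SINR_star N K i s N0 P T \<le> (1 / (6 * real N) * (lmin + hmin) + c0) powr (-1/2)"
    unfolding SINR
  proof (rule cSUP_least)
    show "S \<noteq> {}" using x0S by blast
  next
    fix si assume "si \<in> S"
    hence si: "si \<in> carrier_vec N" and nsi: "nrm2 N si = real N" unfolding S_def nrm2_def by auto
    have "1 / (6 * real N) * (lmin + hmin) = (lmin + hmin) * nrm2 N si / (6 * real N ^ 2)"
      using N nsi by (simp add: power2_eq_square)
    also have "\<dots> \<le> Ff N K i s si / (6 * real N ^ 2)"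
      using lower[OF si] by (simp add: divide_right_mono)
    finally have le: "1 / (6 * real N) * (lmin + hmin) + c0 \<le> Ff N K i s si / (6 * real N ^ 2) + c0" by simp
    have pos: "0 < 1 / (6 * real N) * (lmin + hmin) + c0"
      by (intro add_nonneg_pos mult_nonneg_nonneg) (use lmin0 hmin0 c0 in auto)
    show "g si \<le> (1 / (6 * real N) * (lmin + hmin) + c0) powr (-1/2)"
      unfolding gS[OF si] by (rule powr_mono2'[OF _ pos le]) simp
  qed
  show ?thesis using part1 part2 part3 part4 unfolding Sg_def c0_def by blast
qed

end
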